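(* Consider a single target observed by a linear frequency modulated continuous wave radar with $N$ fast-time samples, $M$ slow-time samples (chirps) and $L$ uniformly spaced receive antennas ($N,M,L\ge 2$), whose baseband data are $$\mathcal{Y}_{n,m,l}=\gamma\, e^{\mathrm{j}(n-1)\omega_x}e^{\mathrm{j}(m-1)\omega_y}e^{\mathrm{j}(l-1)\omega_z}+\epsilon_{n,m,l},\quad n=1,\dots,N,\ m=1,\dots,M,\ l=1,\dots,L,$$ where the $\epsilon_{n,m,l}$ are i.i.d. $\mathcal{CN}(0,\sigma^2)$, $\gamma=g e^{\mathrm{j}\varphi}$ with $g=|\gamma|>0$, and the frequencies are related to the target's radial distance $r$, radial velocity $v$ and azimuth $\theta\in(-\pi/2,\pi/2)$ by $$\omega_x=2\pi\frac{r}{r_{\max}},\qquad \omega_y=\pi\frac{v}{v_{\max}},\qquad \omega_z=\pi\sin\theta,$$ with known constants $r_{\max},v_{\max}>0$. The target's Cartesian position is $p_x=r\sin\theta$, $p_y=r\cos\theta$. Treating $(\omega_x,\omega_y,\omega_z,\varphi,g,\sigma^2)$ as the unknown real parameters, the Cramér–Rao bound for estimating $[p_x,p_y]^{\mathrm T}$ is $$\mathrm{CRB}([p_x,p_y]^{\mathrm T})=\frac{6\sigma^2}{\pi^2NML|\gamma|^2}\begin{bmatrix}\frac{r_{\max}^2\sin^2\theta}{4(N^2-1)}+\frac{r^2}{L^2-1} & \left[\frac{r_{\max}^2}{4(N^2-1)}-\frac{r^2}{(L^2-1)\cos^2\theta}\right]\sin\theta\cos\theta\\ \left[\frac{r_{\max}^2}{4(N^2-1)}-\frac{r^2}{(L^2-1)\cos^2\theta}\right]\sin\theta\cos\theta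 & \frac{r_{\max}^2\cos^2\theta}{4(N^2-1)}+\frac{r^2\tan^2\theta}{L^2-1}\end{bmatrix}.$$
   Context: $\mathcal{CN}(0,\sigma^2)$ denotes the circularly symmetric complex Gaussian distribution with variance $\sigma^2$; $\mathrm{j}=\sqrt{-1}$. The Cramér–Rao bound of a function $\mathbf{h}$ of the parameters is $\frac{\partial\mathbf h}{\partial\boldsymbol\xi^{\mathrm T}}\mathbf F^{-1}(\boldsymbol\xi)\big[\frac{\partial\mathbf h}{\partial\boldsymbol\xi^{\mathrm T}}\big]^{\mathrm T}$, where $\mathbf F(\boldsymbol\xi)$ is the Fisher information matrix of the data with respect to the parameter vector $\boldsymbol\xi=(\omega_x,\omega_y,\omega_z,\varphi,g,\sigma^2)$. *)

theory Defs
  imports "HOL-Analysis.Analysis"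
begin

text \<open>Parameter vector xi = (omega_x, omega_y, omega_z, varphi, g, sigma^2) :: real^6,
  components xi$1 .. xi$6 (index 6 of the numeral type 6).\<close>

definition obs_idx :: "nat \<Rightarrow> nat \<Rightarrow> nat \<Rightarrow> (nat \<times> nat \<times> nat) set" where
  "obs_idx N M L = {1..N} \<times> {1..M} \<times> {1..L}"

definition sig_mean :: "real^6 \<Rightarrow> nat \<times> nat \<times> nat \<Rightarrow> complex" where
  "sig_mean xi = (\<lambda>(n, m, l).
      (complex_of_real (xi$5) * exp (\<i> * complex_of_real (xi$4)))
      * exp (\<i> * complex_of_real (real (n - 1) * xi$1))
      * exp (\<i> * complex_of_real (real (m - 1) * xi$2))
      * exp (\<i> * complex_of_real (real (l - 1) * xi$3)))"

definition cn_pdf :: "real \<Rightarrow> complex \<Rightarrow> real" where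
  "cn_pdf s2 z = exp (- (cmod z)\<^sup>2 / s2) / (pi * s2)"

definition data_space :: "nat \<Rightarrow> nat \<Rightarrow> nat \<Rightarrow> ((nat \<times> nat \<times> nat) \<Rightarrow> complex) measure" where
  "data_space N M L = PiM (obs_idx N M L) (\<lambda>_. (lborel :: complex measure))"

definition data_pdf :: "nat \<Rightarrow> nat \<Rightarrow> nat \<Rightarrow> real^6 \<Rightarrow> ((nat \<times> nat \<times> nat) \<Rightarrow> complex) \<Rightarrow> real" where
  "data_pdf N M L xi y = (\<Prod>k\<in>obs_idx N M L. cn_pdf (xi$6) (y k - sig_mean xi k))"

definition score :: "nat \<Rightarrow> nat \<Rightarrow> nat \<Rightarrow> real^6 \<Rightarrow> 6 \<Rightarrow> ((nat \<times> nat \<times> nat) \<Rightarrow> complex) \<Rightarrow> real" where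
  "score N M L xi i y = deriv (\<lambda>t. ln (data_pdf N M L (xi + t *\<^sub>R axis i 1) y)) 0"

definition fisher_info :: "nat \<Rightarrow> nat \<Rightarrow> nat \<Rightarrow> real^6 \<Rightarrow> real^6^6" where
  "fisher_info N M L xi = (\<chi> i k. integral\<^sup>L (data_space N M L)
      (\<lambda>y. score N M L xi i y * score N M L xi k y * data_pdf N M L xi y))"

definition pos_map :: "real \<Rightarrow> real^6 \<Rightarrow> real^2" where
  "pos_map rmax xi = (let r = xi$1 * rmax / (2 * pi); th = arcsin (xi$3 / pi)
                      in vector [r * sin th, r * cos th])"

definition pos_jacobian :: "real \<Rightarrow> real^6 \<Rightarrow> real^6^2" where
  "pos_jacobian rmax xi = (\<chi> i k. deriv (\<lambda>t. pos_map rmax (xi + t *\<^sub>R axis k 1) $ i) 0)"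

definition crb_pos :: "nat \<Rightarrow> nat \<Rightarrow> nat \<Rightarrow> real \<Rightarrow> real^6 \<Rightarrow> real^2^2" where
  "crb_pos N M L rmax xi =
     pos_jacobian rmax xi ** matrix_inv (fisher_info N M L xi) ** transpose (pos_jacobian rmax xi)"

end

theory Submission
  imports Defs "HOL-Probability.Distributions"
begin

interpretation lbR: product_sigma_finite "\<lambda>_::'i. (lborel::real measure)"
  by unfold_locales

interpretation lbC: product_sigma_finite "\<lambda>_::'i. (lborel::complex measure)"
  by unfold_locales

lemma lborel_complex_eq:
  "(lborel :: complex measure) = distr (\<Pi>\<^sub>M b\<in>Basis. lborel) borel (\<lambda>x. \<Sum>b\<in>Basis. x b *\<^sub>R b)"
  by (rule lborel_eq)

lemma Basis_sum_complex: "(\<Sum>b\<in>(Basis::complex set). x b *\<^sub>R b) = Complex (x 1) (x \<i>)"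
  by (simp add: Basis_complex_def complex_eq_iff)

lemma integral_complex_prod:
  fixes f g :: "real \<Rightarrow> real"
  assumes f: "integrable lborel f" and g: "integrable lborel g"
  shows "integrable lborel (\<lambda>z::complex. f (Re z) * g (Im z))"
    and "integral\<^sup>L lborel (\<lambda>z::complex. f (Re z) * g (Im z)) = integral\<^sup>L lborel f * integral\<^sup>L lborel g"
proof -
  have fm[measurable]: "f \<in> borel_measurable borel" using f by auto
  have gm[measurable]: "g \<in> borel_measurable borel" using g by auto
  define h where "h = (\<lambda>b::complex. if b = 1 then f else g)"
  have meas: "(\<lambda>x. \<Sum>b\<in>(Basis::complex set). x b *\<^sub>R b) \<in> measurable (\<Pi>\<^sub>M b\<in>Basis. lborel) borel"
    by measurable
  have bm: "(\<lambda>z::complex. f (Re z) * g (Im z)) \<in> borel_measurable borel" by measurable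
  have eq: "\<And>x. f (Re (\<Sum>b\<in>(Basis::complex set). x b *\<^sub>R b)) * g (Im (\<Sum>b\<in>Basis. x b *\<^sub>R b))
     = (\<Prod>b\<in>Basis. h b (x b))"
    by (simp add: Basis_sum_complex h_def Basis_complex_def)
  have ih: "\<And>b. b \<in> Basis \<Longrightarrow> integrable lborel (h b)" using f g by (simp add: h_def)
  have pint: "integrable (\<Pi>\<^sub>M b\<in>(Basis::complex set). lborel) (\<lambda>x. \<Prod>b\<in>Basis. h b (x b))"
    by (rule lbR.product_integrable_prod[OF _ ih]) simp_all
  show "integrable lborel (\<lambda>z::complex. f (Re z) * g (Im z))"
    apply (subst lborel_complex_eq)
    apply (subst integrable_distr_eq[OF meas bm])
    using pint by (simp only: eq)
  have "integral\<^sup>L lborel (\<lambda>z::complex. f (Re z) * g (Im z)) =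
        integral\<^sup>L (\<Pi>\<^sub>M b\<in>(Basis::complex set). lborel) (\<lambda>x. \<Prod>b\<in>Basis. h b (x b))"
    apply (subst lborel_complex_eq)
    apply (subst integral_distr[OF meas bm])
    by (simp only: eq)
  also have "\<dots> = (\<Prod>b\<in>(Basis::complex set). integral\<^sup>L lborel (h b))"
    by (rule lbR.product_integral_prod[OF _ ih]) simp_all
  also have "\<dots> = integral\<^sup>L lborel f * integral\<^sup>L lborel g"
    by (simp add: h_def Basis_complex_def)
  finally show "integral\<^sup>L lborel (\<lambda>z::complex. f (Re z) * g (Im z)) = integral\<^sup>L lborel f * integral\<^sup>L lborel g" .
qed

definition mom :: "real \<Rightarrow> nat \<Rightarrow> real" where
  "mom s i = (if even i then fact i / ((4 / s) ^ (i div 2) * fact (i div 2)) else 0)"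

lemma mom_simps: "mom s 0 = 1" "mom s (Suc 0) = 0" "mom s (Suc (Suc 0)) = s / 2" "mom s (Suc (Suc (Suc 0))) = 0" "s \<noteq> 0 \<Longrightarrow> mom s (Suc (Suc (Suc (Suc 0)))) = 3 * s\<^sup>2 / 4"
  by (simp_all add: mom_def fact_numeral power2_eq_square field_simps)
lemma mom_simps2: "mom s 1 = 0" "mom s 2 = s / 2" "mom s 3 = 0" "s \<noteq> 0 \<Longrightarrow> mom s 4 = 3 * s\<^sup>2 / 4"
  by (simp_all add: mom_def fact_numeral power2_eq_square field_simps)

lemma normal_mom:
  assumes s: "s > 0"
  shows "has_bochner_integral lborel (\<lambda>x. normal_density a (sqrt (s/2)) x * (x - a) ^ i) (mom s i)"
proof (cases "even i")
  case True
  then obtain k where k: "i = 2 * k" by (auto elim: evenE)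
  have sp: "sqrt (s/2) > 0" using s by simp
  have "(2 / (sqrt (s/2))\<^sup>2) = 4 / s" using s by simp
  then show ?thesis using normal_moment_even[OF sp, of a k] True k by (simp add: mom_def)
next
  case False
  then obtain k where k: "i = 2 * k + 1" by (auto elim: oddE)
  have sp: "sqrt (s/2) > 0" using s by simp
  show ?thesis using normal_moment_odd[OF sp, of a k] False k by (simp add: mom_def)
qed

lemma cn_pdf_split:
  assumes s: "s > 0"
  shows "cn_pdf s (z - \<mu>) = normal_density (Re \<mu>) (sqrt (s/2)) (Re z) * normal_density (Im \<mu>) (sqrt (s/2)) (Im z)"
proof -
  have "cmod (z - \<mu>) ^ 2 = (Re z - Re \<mu>)^2 + (Im z - Im \<mu>)^2"
    by (simp add: cmod_def)
  moreover have "sqrt (2 * pi * (s / 2)) * sqrt (2 * pi * (s / 2)) = pi * s"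
    using s by simp
  ultimately show ?thesis using s
    unfolding cn_pdf_def normal_density_def
    by (simp add: exp_add[symmetric] field_simps add_divide_distrib)
qed

lemma mono_mom:
  assumes s: "s > 0"
  shows "has_bochner_integral lborel (\<lambda>z. (Re z - Re \<mu>)^i * (Im z - Im \<mu>)^j * cn_pdf s (z - \<mu>)) (mom s i * mom s j)"
proof -
  let ?f = "\<lambda>x. normal_density (Re \<mu>) (sqrt (s/2)) x * (x - Re \<mu>) ^ i"
  let ?g = "\<lambda>x. normal_density (Im \<mu>) (sqrt (s/2)) x * (x - Im \<mu>) ^ j"
  have f: "has_bochner_integral lborel ?f (mom s i)" by (rule normal_mom[OF s])
  have g: "has_bochner_integral lborel ?g (mom s j)" by (rule normal_mom[OF s])
  have eq: "(\<lambda>z. (Re z - Re \<mu>)^i * (Im z - Im \<mu>)^j * cn_pdf s (z - \<mu>)) = (\<lambda>z. ?f (Re z) * ?g (Im z))"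
    by (simp add: cn_pdf_split[OF s] fun_eq_iff mult_ac)
  have fi: "integrable lborel ?f" and gi: "integrable lborel ?g" using f g by (auto simp: has_bochner_integral_iff)
  show ?thesis unfolding eq has_bochner_integral_iff
    using integral_complex_prod[OF fi gi] f g by (simp add: has_bochner_integral_iff)
qed

definition ps :: "(real \<times> nat \<times> nat) list \<Rightarrow> real \<Rightarrow> real \<Rightarrow> real" where
  "ps xs a b = (\<Sum>(c, i, j)\<leftarrow>xs. c * a ^ i * b ^ j)"

definition psE :: "real \<Rightarrow> (real \<times> nat \<times> nat) list \<Rightarrow> real" where
  "psE s xs = (\<Sum>(c, i, j)\<leftarrow>xs. c * (mom s i * mom s j))"

lemma ps_mom:
  assumes s: "s > 0"
  shows "has_bochner_integral lborel (\<lambda>z. ps xs (Re z - Re \<mu>) (Im z - Im \<mu>) * cn_pdf s (z - \<mu>)) (psE s xs)"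
proof (induction xs)
  case Nil
  then show ?case apply (simp add: ps_def psE_def) by (rule has_bochner_integral_zero)
next
  case (Cons x xs)
  obtain c i j where x: "x = (c, i, j)" by (cases x) auto
  have "has_bochner_integral lborel (\<lambda>z. c * ((Re z - Re \<mu>)^i * (Im z - Im \<mu>)^j * cn_pdf s (z - \<mu>))) (c * (mom s i * mom s j))"
    by (rule has_bochner_integral_mult_right[OF mono_mom[OF s]])
  from has_bochner_integral_add[OF this Cons.IH] show ?case
    by (simp add: x ps_def psE_def algebra_simps)
qed

lemma ps_Cons: "ps ((c, i, j) # xs) a b = c * a ^ i * b ^ j + ps xs a b"
  by (simp add: ps_def)
lemma ps_Nil: "ps [] a b = 0"
  by (simp add: ps_def)
lemma ps_append: "ps (xs @ ys) a b = ps xs a b + ps ys a b"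
  by (simp add: ps_def)
lemma ps_scale: "c * a ^ i * b ^ j * ps ys a b = ps (map (\<lambda>(d, k, l). (c * d, i + k, j + l)) ys) a b"
  by (induction ys) (auto simp: ps_def power_add algebra_simps)
lemma ps_mult: "ps xs a b * ps ys a b = ps (concat (map (\<lambda>(c, i, j). map (\<lambda>(d, k, l). (c * d, i + k, j + l)) ys) xs)) a b"
proof (induction xs)
  case Nil then show ?case by (simp add: ps_Nil)
next
  case (Cons x xs)
  obtain c i j where x: "x = (c, i, j)" by (cases x) auto
  show ?case using Cons.IH by (simp add: x ps_Cons ps_append distrib_right ps_scale[symmetric])
qed

definition qlist :: "real \<Rightarrow> real \<Rightarrow> real \<Rightarrow> real \<Rightarrow> (real \<times> nat \<times> nat) list" where
  "qlist A0 A1 A2 G = [(A0, 0, 0), (A1, 1, 0), (A2, 0, 1), (G, 2, 0), (G, 0, 2)]"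

lemma ps_qlist: "ps (qlist A0 A1 A2 G) a b = A0 + A1 * a + A2 * b + G * (a\<^sup>2 + b\<^sup>2)"
  by (simp add: ps_def qlist_def algebra_simps)

lemma psE_qlist: "psE s (qlist A0 A1 A2 G) = A0 + G * s"
  by (simp add: psE_def qlist_def mom_simps mom_simps2)

lemma psE_qlist2:
  assumes "s \<noteq> 0"
  shows "psE s (concat (map (\<lambda>(c, i, j). map (\<lambda>(d, k, l). (c * d, i + k, j + l)) (qlist B0 B1 B2 H)) (qlist A0 A1 A2 G)))
    = A0 * B0 + (A0 * H + G * B0) * s + s / 2 * (A1 * B1 + A2 * B2) + 2 * G * H * s\<^sup>2"
  using assms by (simp add: psE_def qlist_def mom_simps mom_simps2 field_simps power2_eq_square)

lemma prod_expect:
  fixes I :: "'i set" and a b p :: "'i \<Rightarrow> complex \<Rightarrow> real"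
  assumes fin: "finite I"
    and p: "\<And>k. k \<in> I \<Longrightarrow> has_bochner_integral lborel (p k) 1"
    and a: "\<And>k. k \<in> I \<Longrightarrow> has_bochner_integral lborel (\<lambda>z. a k z * p k z) 0"
    and b: "\<And>k. k \<in> I \<Longrightarrow> has_bochner_integral lborel (\<lambda>z. b k z * p k z) 0"
    and ab: "\<And>k. k \<in> I \<Longrightarrow> has_bochner_integral lborel (\<lambda>z. a k z * b k z * p k z) (V k)"
  shows "integral\<^sup>L (Pi\<^sub>M I (\<lambda>_. lborel)) (\<lambda>y. (\<Sum>k\<in>I. a k (y k)) * (\<Sum>k\<in>I. b k (y k)) * (\<Prod>k\<in>I. p k (y k)))
         = (\<Sum>k\<in>I. V k)"
proof -
  define h where "h = (\<lambda>k k' j z. (if j = k then a k z else 1) * (if j = k' then b k' z else 1) * p j z)"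
  have hint: "integrable lborel (h k k' j)" if "k \<in> I" "k' \<in> I" "j \<in> I" for k k' j
  proof -
    consider "j = k" "j = k'" | "j = k" "j \<noteq> k'" | "j \<noteq> k" "j = k'" | "j \<noteq> k" "j \<noteq> k'" by blast
    then show ?thesis
    proof cases
      case 1 then show ?thesis using ab[of j] that by (auto simp: h_def has_bochner_integral_iff)
    next
      case 2 then show ?thesis using a[of j] that by (auto simp: h_def has_bochner_integral_iff)
    next
      case 3 then show ?thesis using b[of j] that by (auto simp: h_def has_bochner_integral_iff)
    next
      case 4 then show ?thesis using p[of j] that by (auto simp: h_def has_bochner_integral_iff)
    qed
  qed
  have eq: "(\<Sum>k\<in>I. a k (y k)) * (\<Sum>k\<in>I. b k (y k)) * (\<Prod>k\<in>I. p k (y k))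
      = (\<Sum>k\<in>I. \<Sum>k'\<in>I. \<Prod>j\<in>I. h k k' j (y j))" for y
  proof -
    have "(\<Prod>j\<in>I. h k k' j (y j)) = a k (y k) * b k' (y k') * (\<Prod>j\<in>I. p j (y j))"
      if "k \<in> I" "k' \<in> I" for k k'
      using that fin by (simp add: h_def prod.distrib prod.delta)
    then have "(\<Sum>k\<in>I. \<Sum>k'\<in>I. \<Prod>j\<in>I. h k k' j (y j)) = (\<Sum>k\<in>I. \<Sum>k'\<in>I. a k (y k) * (b k' (y k') * (\<Prod>j\<in>I. p j (y j))))"
      by (simp add: mult.assoc)
    also have "\<dots> = (\<Sum>k\<in>I. a k (y k) * ((\<Sum>k'\<in>I. b k' (y k')) * (\<Prod>j\<in>I. p j (y j))))"
      by (simp only: sum_distrib_left sum_distrib_right)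
    also have "\<dots> = (\<Sum>k\<in>I. a k (y k)) * (\<Sum>k\<in>I. b k (y k)) * (\<Prod>k\<in>I. p k (y k))"
      by (simp only: sum_distrib_right mult.assoc)
    finally show ?thesis by simp
  qed
  have int_each: "integral\<^sup>L (Pi\<^sub>M I (\<lambda>_. lborel)) (\<lambda>y. \<Prod>j\<in>I. h k k' j (y j)) = (if k = k' then V k else 0)"
    if "k \<in> I" "k' \<in> I" for k k'
  proof -
    have "integral\<^sup>L (Pi\<^sub>M I (\<lambda>_. lborel)) (\<lambda>y. \<Prod>j\<in>I. h k k' j (y j)) = (\<Prod>j\<in>I. integral\<^sup>L lborel (h k k' j))"
      by (rule lbC.product_integral_prod[OF fin hint[OF that]])
    also have "\<dots> = (if k = k' then V k else 0)"
    proof (cases "k = k'")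
      case True
      have "(\<Prod>j\<in>I. integral\<^sup>L lborel (h k k' j)) = (\<Prod>j\<in>I. if j = k then V k else 1)"
        using True ab p by (intro prod.cong) (auto simp: h_def has_bochner_integral_iff)
      then show ?thesis using True that fin by (simp add: prod.delta)
    next
      case False
      have "integral\<^sup>L lborel (h k k' k) = 0"
        using False a[OF that(1)] by (auto simp: h_def has_bochner_integral_iff)
      then show ?thesis using False that fin by (auto intro!: prod_zero)
    qed
    finally show ?thesis .
  qed
  have "integral\<^sup>L (Pi\<^sub>M I (\<lambda>_. lborel)) (\<lambda>y. (\<Sum>k\<in>I. a k (y k)) * (\<Sum>k\<in>I. b k (y k)) * (\<Prod>k\<in>I. p k (y k)))
     = integral\<^sup>L (Pi\<^sub>M I (\<lambda>_. lborel)) (\<lambda>y. \<Sum>k\<in>I. \<Sum>k'\<in>I. \<Prod>j\<in>I. h k k' j (y j))"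
    by (simp only: eq)
  also have "\<dots> = (\<Sum>k\<in>I. \<Sum>k'\<in>I. integral\<^sup>L (Pi\<^sub>M I (\<lambda>_. lborel)) (\<lambda>y. \<Prod>j\<in>I. h k k' j (y j)))"
  proof -
    have pi: "integrable (Pi\<^sub>M I (\<lambda>_. lborel)) (\<lambda>y. \<Prod>j\<in>I. h k k' j (y j))" if "k \<in> I" "k' \<in> I" for k k'
      by (rule lbC.product_integrable_prod[OF fin]) (rule hint[OF that])
    have "integral\<^sup>L (Pi\<^sub>M I (\<lambda>_. lborel)) (\<lambda>y. \<Sum>k\<in>I. \<Sum>k'\<in>I. \<Prod>j\<in>I. h k k' j (y j))
      = (\<Sum>k\<in>I. integral\<^sup>L (Pi\<^sub>M I (\<lambda>_. lborel)) (\<lambda>y. \<Sum>k'\<in>I. \<Prod>j\<in>I. h k k' j (y j)))"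
      by (rule Bochner_Integration.integral_sum) (auto intro!: integrable_sum pi)
    also have "\<dots> = (\<Sum>k\<in>I. \<Sum>k'\<in>I. integral\<^sup>L (Pi\<^sub>M I (\<lambda>_. lborel)) (\<lambda>y. \<Prod>j\<in>I. h k k' j (y j)))"
      by (intro sum.cong refl Bochner_Integration.integral_sum pi) auto
    finally show ?thesis .
  qed
  also have "\<dots> = (\<Sum>k\<in>I. \<Sum>k'\<in>I. if k = k' then V k else 0)"
    by (intro sum.cong refl int_each)
  also have "\<dots> = (\<Sum>k\<in>I. V k)"
    using fin by simp
  finally show ?thesis .
qed

definition th :: "real^6 \<Rightarrow> nat \<times> nat \<times> nat \<Rightarrow> real" where
  "th v = (\<lambda>(n, m, l). v$4 + real (n - 1) * v$1 + real (m - 1) * v$2 + real (l - 1) * v$3)"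

lemma th_lin: "th (\<xi> + t *\<^sub>R d) k = th \<xi> k + t * th d k"
  by (cases k) (auto simp: th_def algebra_simps)

lemma sig_mean_eq: "sig_mean \<xi> k = complex_of_real (\<xi>$5) * cis (th \<xi> k)"
proof -
  obtain n m l where k: "k = (n, m, l)" by (cases k) auto
  have "cis (th \<xi> k) = cis (\<xi>$4) * cis (real (n - 1) * \<xi>$1) * cis (real (m - 1) * \<xi>$2) * cis (real (l - 1) * \<xi>$3)"
    by (simp add: k th_def cis_mult add_ac)
  then show ?thesis by (simp add: sig_mean_def k cis_conv_exp mult_ac)
qed

lemma finite_obs: "finite (obs_idx N M L)"
  by (simp add: obs_idx_def)

definition qco :: "real^6 \<Rightarrow> real^6 \<Rightarrow> nat \<times> nat \<times> nat \<Rightarrow> (real \<times> nat \<times> nat) list" where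
  "qco \<xi> d k = qlist (- (d$6) / \<xi>$6)
      (2 / \<xi>$6 * (d$5 * cos (th \<xi> k) - \<xi>$5 * sin (th \<xi> k) * th d k))
      (2 / \<xi>$6 * (d$5 * sin (th \<xi> k) + \<xi>$5 * cos (th \<xi> k) * th d k))
      (d$6 / (\<xi>$6)\<^sup>2)"

lemma deriv_l:
  fixes Y1 Y2 g s T d5 d6 dT :: real
  assumes s: "s > 0"
  shows "((\<lambda>t. - ((Y1 - (g + t * d5) * cos (T + t * dT))\<^sup>2 + (Y2 - (g + t * d5) * sin (T + t * dT))\<^sup>2) / (s + t * d6)
              - ln (pi * (s + t * d6))) has_field_derivative
          ps (qlist (- d6 / s) (2 / s * (d5 * cos T - g * sin T * dT)) (2 / s * (d5 * sin T + g * cos T * dT)) (d6 / s\<^sup>2))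
            (Y1 - g * cos T) (Y2 - g * sin T)) (at 0)"
proof -
  have Q: "((\<lambda>t. - ((Y1 - (g + t * d5) * cos (T + t * dT))\<^sup>2 + (Y2 - (g + t * d5) * sin (T + t * dT))\<^sup>2) / (s + t * d6))
     has_field_derivative
      ((2 * (d5 * cos T - g * sin T * dT) * (Y1 - g * cos T) + 2 * (d5 * sin T + g * cos T * dT) * (Y2 - g * sin T)) / s
        + ((Y1 - g * cos T)\<^sup>2 + (Y2 - g * sin T)\<^sup>2) * d6 / s\<^sup>2)) (at 0)"
    apply (rule derivative_eq_intros refl)+
    using s apply simp
    using s by (simp add: field_simps power2_eq_square)
  have L: "((\<lambda>t. ln (pi * (s + t * d6))) has_field_derivative (1 / (pi * (s + 0 * d6))) * (pi * (0 * d6 + 1 * d6))) (at 0)"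
    apply (rule DERIV_ln_divide[THEN DERIV_chain2])
    using s apply simp
    apply (rule derivative_eq_intros refl)+
    by simp
  have D: "(2 * (d5 * cos T - g * sin T * dT) * (Y1 - g * cos T) + 2 * (d5 * sin T + g * cos T * dT) * (Y2 - g * sin T)) / s
        + ((Y1 - g * cos T)\<^sup>2 + (Y2 - g * sin T)\<^sup>2) * d6 / s\<^sup>2 - (1 / (pi * (s + 0 * d6))) * (pi * (0 * d6 + 1 * d6))
     = ps (qlist (- d6 / s) (2 / s * (d5 * cos T - g * sin T * dT)) (2 / s * (d5 * sin T + g * cos T * dT)) (d6 / s\<^sup>2))
            (Y1 - g * cos T) (Y2 - g * sin T)"
    using s by (simp add: ps_qlist field_simps power2_eq_square)
  show ?thesis using DERIV_diff[OF Q L] unfolding D .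
qed

lemma score_eq:
  assumes s: "\<xi>$6 > 0"
  shows "score N M L \<xi> i y = (\<Sum>k\<in>obs_idx N M L. ps (qco \<xi> (axis i 1) k) (Re (y k - sig_mean \<xi> k)) (Im (y k - sig_mean \<xi> k)))"
proof -
  define d where "d = (axis i 1 :: real^6)"
  define s where "s = \<xi>$6"
  define I where "I = obs_idx N M L"
  define l where "l = (\<lambda>k t. - ((Re (y k) - (\<xi>$5 + t * d$5) * cos (th \<xi> k + t * th d k))\<^sup>2
       + (Im (y k) - (\<xi>$5 + t * d$5) * sin (th \<xi> k + t * th d k))\<^sup>2) / (s + t * d$6) - ln (pi * (s + t * d$6)))"
  have spos: "s > 0" using s by (simp add: s_def)
  have fin: "finite I" by (simp add: I_def finite_obs)
  have d6: "d$6 = 0 \<or> d$6 = 1" by (simp add: d_def axis_def)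
  have ev: "eventually (\<lambda>t. ln (data_pdf N M L (\<xi> + t *\<^sub>R d) y) = (\<Sum>k\<in>I. l k t)) (nhds 0)"
  proof -
    have "eventually (\<lambda>t. dist t 0 < s) (nhds (0::real))"
      unfolding eventually_nhds_metric using spos by auto
    then show ?thesis
    proof (rule eventually_mono)
      fix t :: real assume "dist t 0 < s"
      then have st: "s + t * d$6 > 0" using d6 by (auto simp: dist_real_def)
      have eq1: "data_pdf N M L (\<xi> + t *\<^sub>R d) y = (\<Prod>k\<in>I. cn_pdf (s + t * d$6)
           (y k - complex_of_real (\<xi>$5 + t * d$5) * cis (th \<xi> k + t * th d k)))"
        by (simp add: data_pdf_def I_def sig_mean_eq th_lin s_def)
      have eq2: "ln (cn_pdf (s + t * d$6) (y k - complex_of_real (\<xi>$5 + t * d$5) * cis (th \<xi> k + t * th d k)))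
          = l k t" for k
      proof -
        have "(cmod (y k - complex_of_real (\<xi>$5 + t * d$5) * cis (th \<xi> k + t * th d k)))\<^sup>2
          = (Re (y k) - (\<xi>$5 + t * d$5) * cos (th \<xi> k + t * th d k))\<^sup>2
           + (Im (y k) - (\<xi>$5 + t * d$5) * sin (th \<xi> k + t * th d k))\<^sup>2"
          by (simp add: cmod_power2)
        then show ?thesis using st
          by (simp add: cn_pdf_def l_def ln_div)
      qed
      have pos: "cn_pdf (s + t * d$6) z \<noteq> 0" for z
        using st by (simp add: cn_pdf_def)
      show "ln (data_pdf N M L (\<xi> + t *\<^sub>R d) y) = (\<Sum>k\<in>I. l k t)"
        unfolding eq1 by (subst ln_prod[OF fin pos]) (rule sum.cong[OF refl], rule eq2)
    qed
  qed
  have D: "((\<lambda>t. \<Sum>k\<in>I. l k t) has_field_derivative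
      (\<Sum>k\<in>I. ps (qco \<xi> d k) (Re (y k - sig_mean \<xi> k)) (Im (y k - sig_mean \<xi> k)))) (at 0)"
  proof (rule DERIV_sum)
    fix k assume "k \<in> I"
    have "Re (y k - sig_mean \<xi> k) = Re (y k) - \<xi>$5 * cos (th \<xi> k)"
         "Im (y k - sig_mean \<xi> k) = Im (y k) - \<xi>$5 * sin (th \<xi> k)"
      by (simp_all add: sig_mean_eq)
    then show "((\<lambda>t. l k t) has_field_derivative
       ps (qco \<xi> d k) (Re (y k - sig_mean \<xi> k)) (Im (y k - sig_mean \<xi> k))) (at 0)"
      unfolding l_def qco_def s_def[symmetric] using deriv_l[OF spos] by simp
  qed
  have D2: "((\<lambda>t. ln (data_pdf N M L (\<xi> + t *\<^sub>R d) y)) has_field_derivative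
      (\<Sum>k\<in>I. ps (qco \<xi> d k) (Re (y k - sig_mean \<xi> k)) (Im (y k - sig_mean \<xi> k)))) (at 0)"
    using D by (subst DERIV_cong_ev[OF refl ev refl])
  show ?thesis
    unfolding score_def using DERIV_imp_deriv[OF D2] by (simp add: d_def I_def)
qed

lemma ps_re: "ps xs (Re (z - \<mu>)) (Im (z - \<mu>)) = ps xs (Re z - Re \<mu>) (Im z - Im \<mu>)"
  by simp

lemma rot_id:
  fixes d5 e5 g dT eT T :: real
  shows "(d5 * cos T - g * sin T * dT) * (e5 * cos T - g * sin T * eT) + (d5 * sin T + g * cos T * dT) * (e5 * sin T + g * cos T * eT)
     = d5 * e5 + g\<^sup>2 * dT * eT"
proof -
  have c2: "cos T * cos T = 1 - sin T * sin T" using sin_cos_squared_add[of T] by (simp add: power2_eq_square)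
  show ?thesis by (simp add: algebra_simps power2_eq_square c2)
qed

lemma qval:
  fixes s d5 d6 e5 e6 g dT eT T :: real
  assumes "s > 0"
  shows "(- d6 / s) * (- e6 / s) + ((- d6 / s) * (e6 / s\<^sup>2) + (d6 / s\<^sup>2) * (- e6 / s)) * s
    + s / 2 * ((2 / s * (d5 * cos T - g * sin T * dT)) * (2 / s * (e5 * cos T - g * sin T * eT))
             + (2 / s * (d5 * sin T + g * cos T * dT)) * (2 / s * (e5 * sin T + g * cos T * eT)))
    + 2 * (d6 / s\<^sup>2) * (e6 / s\<^sup>2) * s\<^sup>2
    = 2 / s * (d5 * e5 + g\<^sup>2 * dT * eT) + d6 * e6 / s\<^sup>2"
proof -
  have "s / 2 * ((2 / s * (d5 * cos T - g * sin T * dT)) * (2 / s * (e5 * cos T - g * sin T * eT))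
             + (2 / s * (d5 * sin T + g * cos T * dT)) * (2 / s * (e5 * sin T + g * cos T * eT)))
      = 2 / s * ((d5 * cos T - g * sin T * dT) * (e5 * cos T - g * sin T * eT) + (d5 * sin T + g * cos T * dT) * (e5 * sin T + g * cos T * eT))"
    using assms by (simp add: field_simps)
  also have "\<dots> = 2 / s * (d5 * e5 + g\<^sup>2 * dT * eT)" by (simp add: rot_id)
  finally have h: "s / 2 * ((2 / s * (d5 * cos T - g * sin T * dT)) * (2 / s * (e5 * cos T - g * sin T * eT))
             + (2 / s * (d5 * sin T + g * cos T * dT)) * (2 / s * (e5 * sin T + g * cos T * eT)))
      = 2 / s * (d5 * e5 + g\<^sup>2 * dT * eT)" .
  have h2: "(- d6 / s) * (- e6 / s) + ((- d6 / s) * (e6 / s\<^sup>2) + (d6 / s\<^sup>2) * (- e6 / s)) * s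
    + 2 * (d6 / s\<^sup>2) * (e6 / s\<^sup>2) * s\<^sup>2 = d6 * e6 / s\<^sup>2"
    using assms by (simp add: field_simps power2_eq_square)
  show ?thesis using h h2 by linarith
qed

lemma fisher_entry:
  assumes s: "\<xi>$6 > 0"
  shows "fisher_info N M L \<xi> $ i $ j = (\<Sum>k\<in>obs_idx N M L.
     2 / \<xi>$6 * ((axis i 1 :: real^6)$5 * (axis j 1 :: real^6)$5 + (\<xi>$5)\<^sup>2 * th (axis i 1) k * th (axis j 1) k)
     + (axis i 1 :: real^6)$6 * (axis j 1 :: real^6)$6 / (\<xi>$6)\<^sup>2)"
proof -
  define I where "I = obs_idx N M L"
  define s where "s = \<xi>$6"
  have spos: "s > 0" using s by (simp add: s_def)
  define a where "a = (\<lambda>i k z. ps (qco \<xi> (axis i 1) k) (Re (z - sig_mean \<xi> k)) (Im (z - sig_mean \<xi> k)))"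
  define p where "p = (\<lambda>k z. cn_pdf s (z - sig_mean \<xi> k))"
  have fin: "finite I" by (simp add: I_def finite_obs)
  have eq: "fisher_info N M L \<xi> $ i $ j = integral\<^sup>L (Pi\<^sub>M I (\<lambda>_. lborel))
     (\<lambda>y. (\<Sum>k\<in>I. a i k (y k)) * (\<Sum>k\<in>I. a j k (y k)) * (\<Prod>k\<in>I. p k (y k)))"
    unfolding fisher_info_def data_space_def
    by (simp add: score_eq[OF s] a_def p_def data_pdf_def I_def s_def)
  have P: "has_bochner_integral lborel (p k) 1" for k
    using mono_mom[OF spos, of "sig_mean \<xi> k" 0 0] by (simp add: p_def mom_simps)
  have A: "has_bochner_integral lborel (\<lambda>z. a i' k z * p k z) 0" for i' k
  proof -
    have "psE s (qco \<xi> (axis i' 1) k) = 0"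
      using spos by (simp add: qco_def psE_qlist s_def power2_eq_square)
    then show ?thesis using ps_mom[OF spos, of "qco \<xi> (axis i' 1) k" "sig_mean \<xi> k"]
      by (simp add: a_def p_def)
  qed
  have AB: "has_bochner_integral lborel (\<lambda>z. a i k z * a j k z * p k z)
     (2 / \<xi>$6 * ((axis i 1 :: real^6)$5 * (axis j 1 :: real^6)$5 + (\<xi>$5)\<^sup>2 * th (axis i 1) k * th (axis j 1) k)
     + (axis i 1 :: real^6)$6 * (axis j 1 :: real^6)$6 / (\<xi>$6)\<^sup>2)" for k
  proof -
    have v: "psE s (concat (map (\<lambda>(c, i1, j1). map (\<lambda>(d, k1, l1). (c * d, i1 + k1, j1 + l1)) (qco \<xi> (axis j 1) k)) (qco \<xi> (axis i 1) k)))
       = 2 / \<xi>$6 * ((axis i 1 :: real^6)$5 * (axis j 1 :: real^6)$5 + (\<xi>$5)\<^sup>2 * th (axis i 1) k * th (axis j 1) k)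
     + (axis i 1 :: real^6)$6 * (axis j 1 :: real^6)$6 / (\<xi>$6)\<^sup>2"
      unfolding qco_def using spos
      apply (subst psE_qlist2)
       apply simp
      apply (simp only: s_def[symmetric])
      by (rule qval[OF spos])
    have f: "(\<lambda>z. a i k z * a j k z * p k z) = (\<lambda>z. ps (concat (map (\<lambda>(c, i1, j1). map (\<lambda>(d, k1, l1). (c * d, i1 + k1, j1 + l1)) (qco \<xi> (axis j 1) k)) (qco \<xi> (axis i 1) k)))
         (Re z - Re (sig_mean \<xi> k)) (Im z - Im (sig_mean \<xi> k)) * cn_pdf s (z - sig_mean \<xi> k))"
      by (simp add: a_def p_def ps_mult)
    show ?thesis unfolding f v[symmetric] by (rule ps_mom[OF spos])
  qed
  show ?thesis unfolding eq I_def[symmetric]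
    by (rule prod_expect[OF fin P A A AB])
qed

lemma exhaust_6:
  fixes x :: 6
  shows "x = 1 \<or> x = 2 \<or> x = 3 \<or> x = 4 \<or> x = 5 \<or> x = 6"
proof (induct x)
  case (of_int z)
  then have "z = 0 \<or> z = 1 \<or> z = 2 \<or> z = 3 \<or> z = 4 \<or> z = 5" by fastforce
  then show ?case by auto
qed

lemma UNIV_6: "UNIV = {1::6, 2, 3, 4, 5, 6}"
  using exhaust_6 by auto

lemma vector_6 [simp]:
 "(vector [a,b,c,d,e,f] ::('a::zero)^6)$1 = a"
 "(vector [a,b,c,d,e,f] ::('a::zero)^6)$2 = b"
 "(vector [a,b,c,d,e,f] ::('a::zero)^6)$3 = c"
 "(vector [a,b,c,d,e,f] ::('a::zero)^6)$4 = d"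
 "(vector [a,b,c,d,e,f] ::('a::zero)^6)$5 = e"
 "(vector [a,b,c,d,e,f] ::('a::zero)^6)$6 = f"
  unfolding vector_def by simp_all

lemma sum_6: "sum f (UNIV::6 set) = f 1 + f 2 + f 3 + f 4 + f 5 + f 6"
  unfolding UNIV_6 by (simp add: ac_simps)

definition Fm :: "real \<Rightarrow> real \<Rightarrow> real \<Rightarrow> real \<Rightarrow> real \<Rightarrow> real \<Rightarrow> real \<Rightarrow> real \<Rightarrow> real \<Rightarrow> real^6^6" where
  "Fm c mx my mz vx vy vz f5 f6 = vector [
     vector [c * (vx + mx\<^sup>2), c * mx * my, c * mx * mz, c * mx, 0, 0],
     vector [c * mx * my, c * (vy + my\<^sup>2), c * my * mz, c * my, 0, 0],
     vector [c * mx * mz, c * my * mz, c * (vz + mz\<^sup>2), c * mz, 0, 0],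
     vector [c * mx, c * my, c * mz, c, 0, 0],
     vector [0, 0, 0, 0, f5, 0],
     vector [0, 0, 0, 0, 0, f6]]"

definition Gm :: "real \<Rightarrow> real \<Rightarrow> real \<Rightarrow> real \<Rightarrow> real \<Rightarrow> real \<Rightarrow> real \<Rightarrow> real \<Rightarrow> real \<Rightarrow> real^6^6" where
  "Gm c mx my mz vx vy vz f5 f6 = vector [
     vector [1 / (c * vx), 0, 0, - mx / (c * vx), 0, 0],
     vector [0, 1 / (c * vy), 0, - my / (c * vy), 0, 0],
     vector [0, 0, 1 / (c * vz), - mz / (c * vz), 0, 0],
     vector [- mx / (c * vx), - my / (c * vy), - mz / (c * vz), (1 + mx\<^sup>2 / vx + my\<^sup>2 / vy + mz\<^sup>2 / vz) / c, 0, 0],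
     vector [0, 0, 0, 0, 1 / f5, 0],
     vector [0, 0, 0, 0, 0, 1 / f6]]"

lemma FG_inv:
  assumes "c \<noteq> 0" "vx \<noteq> 0" "vy \<noteq> 0" "vz \<noteq> 0" "f5 \<noteq> 0" "f6 \<noteq> 0"
  shows "Fm c mx my mz vx vy vz f5 f6 ** Gm c mx my mz vx vy vz f5 f6 = mat 1"
  unfolding vec_eq_iff matrix_matrix_mult_def
proof (intro allI)
  fix i j :: 6
  show "(\<chi> i j. \<Sum>k\<in>UNIV. Fm c mx my mz vx vy vz f5 f6 $ i $ k * Gm c mx my mz vx vy vz f5 f6 $ k $ j) $ i $ j = mat 1 $ i $ j"
    using exhaust_6[of i] exhaust_6[of j] assms
    by (auto simp: sum_6 Fm_def Gm_def mat_def field_simps power2_eq_square)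
qed

lemma matrix_inv_eq:
  fixes A B :: "real^'n^'n"
  assumes "A ** B = mat 1"
  shows "matrix_inv A = B"
proof -
  have BA: "B ** A = mat 1" using assms matrix_left_right_inverse by blast
  have ex: "\<exists>A'. A ** A' = mat 1 \<and> A' ** A = mat 1" using assms BA by blast
  define C where "C = matrix_inv A"
  have C: "A ** C = mat 1 \<and> C ** A = mat 1"
    unfolding C_def matrix_inv_def by (rule someI_ex[OF ex])
  have "C = C ** (A ** B)" by (simp add: assms)
  also have "\<dots> = (C ** A) ** B" by (simp add: matrix_mul_assoc)
  also have "\<dots> = B" using C by simp
  finally show ?thesis by (simp add: C_def)
qed

definition fx :: "6 \<Rightarrow> nat \<Rightarrow> real" where
  "fx i n = (if i = 1 then real (n - 1) else if i = 5 \<or> i = 6 then 0 else 1)"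
definition fy :: "6 \<Rightarrow> nat \<Rightarrow> real" where
  "fy i n = (if i = 2 then real (n - 1) else 1)"
definition fz :: "6 \<Rightarrow> nat \<Rightarrow> real" where
  "fz i n = (if i = 3 then real (n - 1) else 1)"

lemma th_axis: "th (axis i 1) (n, m, l) = fx i n * fy i m * fz i l"
  using exhaust_6[of i] by (auto simp: th_def axis_def fx_def fy_def fz_def)

lemma sum_obs_prod:
  fixes a b c :: "nat \<Rightarrow> real"
  shows "(\<Sum>(n, m, l)\<in>obs_idx N M L. a n * b m * c l) = sum a {1..N} * sum b {1..M} * sum c {1..L}"
proof -
  let ?A = "{1..N}" and ?B = "{1..M}" and ?C = "{1..L}"
  have "(\<Sum>(n, m, l)\<in>?A \<times> ?B \<times> ?C. a n * b m * c l) = (\<Sum>n\<in>?A. \<Sum>(m, l)\<in>?B \<times> ?C. a n * (b m * c l))"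
    by (simp add: sum.cartesian_product mult.assoc)
  also have "\<dots> = (\<Sum>n\<in>?A. a n * (\<Sum>(m, l)\<in>?B \<times> ?C. b m * c l))"
    by (simp add: sum_distrib_left case_prod_beta)
  also have "(\<Sum>(m, l)\<in>?B \<times> ?C. b m * c l) = sum b ?B * sum c ?C"
    by (simp add: sum.cartesian_product sum_product)
  finally show ?thesis unfolding obs_idx_def by (simp add: sum_distrib_right mult.assoc)
qed

lemma card_obs: "(\<Sum>k\<in>obs_idx N M L. (1::real)) = real N * real M * real L"
  by (simp add: obs_idx_def card_cartesian_product)

lemma fisher_closed:
  assumes s: "\<xi>$6 > 0"
  shows "fisher_info N M L \<xi> $ i $ j =
     2 / \<xi>$6 * ((axis i 1 :: real^6)$5 * (axis j 1 :: real^6)$5 * (real N * real M * real L)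
       + (\<xi>$5)\<^sup>2 * ((\<Sum>n=1..N. fx i n * fx j n) * (\<Sum>m=1..M. fy i m * fy j m) * (\<Sum>l=1..L. fz i l * fz j l)))
     + (axis i 1 :: real^6)$6 * (axis j 1 :: real^6)$6 * (real N * real M * real L) / (\<xi>$6)\<^sup>2"
proof -
  have T: "(\<Sum>k\<in>obs_idx N M L. th (axis i 1) k * th (axis j 1) k)
     = (\<Sum>n=1..N. fx i n * fx j n) * (\<Sum>m=1..M. fy i m * fy j m) * (\<Sum>l=1..L. fz i l * fz j l)"
  proof -
    have "(\<Sum>k\<in>obs_idx N M L. th (axis i 1) k * th (axis j 1) k)
       = (\<Sum>(n, m, l)\<in>obs_idx N M L. (fx i n * fx j n) * (fy i m * fy j m) * (fz i l * fz j l))"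
      by (intro sum.cong refl) (auto simp: th_axis mult_ac)
    then show ?thesis by (simp only: sum_obs_prod)
  qed
  have "fisher_info N M L \<xi> $ i $ j = (\<Sum>k\<in>obs_idx N M L.
     2 / \<xi>$6 * ((axis i 1 :: real^6)$5 * (axis j 1 :: real^6)$5) * 1
     + (2 / \<xi>$6 * (\<xi>$5)\<^sup>2) * (th (axis i 1) k * th (axis j 1) k)
     + (axis i 1 :: real^6)$6 * (axis j 1 :: real^6)$6 / (\<xi>$6)\<^sup>2 * 1)"
    unfolding fisher_entry[OF s] by (intro sum.cong refl) (simp add: algebra_simps)
  also have "\<dots> = 2 / \<xi>$6 * ((axis i 1 :: real^6)$5 * (axis j 1 :: real^6)$5) * (\<Sum>k\<in>obs_idx N M L. 1)
     + (2 / \<xi>$6 * (\<xi>$5)\<^sup>2) * (\<Sum>k\<in>obs_idx N M L. th (axis i 1) k * th (axis j 1) k)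
     + (axis i 1 :: real^6)$6 * (axis j 1 :: real^6)$6 / (\<xi>$6)\<^sup>2 * (\<Sum>k\<in>obs_idx N M L. 1)"
    by (simp only: sum.distrib sum_distrib_left)
  also have "\<dots> = 2 / \<xi>$6 * ((axis i 1 :: real^6)$5 * (axis j 1 :: real^6)$5 * (real N * real M * real L)
       + (\<xi>$5)\<^sup>2 * ((\<Sum>n=1..N. fx i n * fx j n) * (\<Sum>m=1..M. fy i m * fy j m) * (\<Sum>l=1..L. fz i l * fz j l)))
     + (axis i 1 :: real^6)$6 * (axis j 1 :: real^6)$6 * (real N * real M * real L) / (\<xi>$6)\<^sup>2"
    unfolding T card_obs by (simp add: algebra_simps)
  finally show ?thesis .
qed

lemma s1: "(\<Sum>n=1..N. real (n - 1)) = real N * (real N - 1) / 2"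
  by (induction N) (auto simp: field_simps)

lemma s2: "(\<Sum>n=1..N. real (n - 1) * real (n - 1)) = real N * (real N - 1) * (2 * real N - 1) / 6"
  by (induction N) (auto simp: field_simps)

lemma s2': "(\<Sum>n=1..N. (real (n - 1))\<^sup>2) = real N * (real N - 1) * (2 * real N - 1) / 6"
  using s2 by (simp add: power2_eq_square)

lemma s1b: "(\<Sum>n=Suc 0..N. real n - 1) = real N * (real N - 1) / 2"
  by (induction N) (auto simp: field_simps)

lemma s2b: "(\<Sum>n=Suc 0..N. (real n - 1) * (real n - 1)) = real N * (real N - 1) * (2 * real N - 1) / 6"
  by (induction N) (auto simp: field_simps)

lemma fisher_concrete:
  assumes s: "\<xi>$6 > 0"
  shows "fisher_info N M L \<xi> = Fm (2 * (\<xi>$5)\<^sup>2 * (real N * real M * real L) / \<xi>$6)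
     ((real N - 1) / 2) ((real M - 1) / 2) ((real L - 1) / 2)
     (((real N)\<^sup>2 - 1) / 12) (((real M)\<^sup>2 - 1) / 12) (((real L)\<^sup>2 - 1) / 12)
     (2 * (real N * real M * real L) / \<xi>$6) ((real N * real M * real L) / (\<xi>$6)\<^sup>2)"
  unfolding vec_eq_iff
proof (intro allI)
  fix i j :: 6
  show "fisher_info N M L \<xi> $ i $ j = Fm (2 * (\<xi>$5)\<^sup>2 * (real N * real M * real L) / \<xi>$6)
     ((real N - 1) / 2) ((real M - 1) / 2) ((real L - 1) / 2)
     (((real N)\<^sup>2 - 1) / 12) (((real M)\<^sup>2 - 1) / 12) (((real L)\<^sup>2 - 1) / 12)
     (2 * (real N * real M * real L) / \<xi>$6) ((real N * real M * real L) / (\<xi>$6)\<^sup>2) $ i $ j"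
    unfolding fisher_closed[OF s]
    using exhaust_6[of i] exhaust_6[of j] s
    apply (auto simp: Fm_def axis_def fx_def fy_def fz_def s1 s2 s2' s1b s2b)
    by (simp_all add: field_simps power2_eq_square)
qed

lemma arcsin_eq_intro:
  assumes "(f has_field_derivative f') (at x)" "- 1 < f x" "f x < 1"
    "D = inverse (sqrt (1 - (f x)\<^sup>2)) * f'"
  shows "((\<lambda>t. arcsin (f t)) has_field_derivative D) (at x)"
  using DERIV_chain2[OF DERIV_arcsin[OF assms(2,3)] assms(1)] assms(4) by simp

lemma sin_bounds:
  assumes "- (pi / 2) < \<theta>" "\<theta> < pi / 2"
  shows "- 1 < sin \<theta>" "sin \<theta> < 1" "cos \<theta> > 0" "sqrt (1 - (sin \<theta>)\<^sup>2) = cos \<theta>"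
proof -
  have c: "cos \<theta> > 0" using cos_gt_zero_pi assms by blast
  have "(cos \<theta>)\<^sup>2 > 0" using c by simp
  then have "(sin \<theta>)\<^sup>2 < 1" using sin_cos_squared_add[of \<theta>] by linarith
  then have "\<bar>sin \<theta>\<bar> < 1" by (simp add: abs_square_less_1)
  then show "- 1 < sin \<theta>" "sin \<theta> < 1" by auto
  show "cos \<theta> > 0" by (rule c)
  have "1 - (sin \<theta>)\<^sup>2 = (cos \<theta>)\<^sup>2" by (simp add: cos_squared_eq)
  then show "sqrt (1 - (sin \<theta>)\<^sup>2) = cos \<theta>" using c by simp
qed

lemma arcsin_path:
  assumes "- 1 < sin \<theta>" "sin \<theta> < 1"
  shows "((\<lambda>t. arcsin ((pi * sin \<theta> + t * d3) / pi)) has_field_derivative inverse (sqrt (1 - (sin \<theta>)\<^sup>2)) * (d3 / pi)) (at 0)"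
  apply (rule arcsin_eq_intro)
  apply (rule derivative_eq_intros refl)+
  using assms apply simp_all by (metis times_divide_eq_right)

lemma R_path:
  assumes rm: "rmax > 0"
  shows "((\<lambda>t. (2 * pi * r / rmax + t * dd) * rmax / (2 * pi)) has_field_derivative dd * rmax / (2 * pi)) (at 0)"
proof -
  have lin: "((\<lambda>t. 2 * pi * r / rmax + t * dd) has_field_derivative dd) (at 0)"
    apply (rule derivative_eq_intros refl)+
    by simp
  show ?thesis using DERIV_cdivide[OF DERIV_cmult_right[OF lin], of rmax "2 * pi"] by simp
qed

lemma jac1:
  assumes th: "- (pi / 2) < \<theta>" "\<theta> < pi / 2" and rm: "rmax > 0"
  shows "((\<lambda>t. (2 * pi * r / rmax + t * d1) * rmax / (2 * pi) * sin (arcsin ((pi * sin \<theta> + t * d3) / pi)))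
     has_field_derivative (d1 * rmax * sin \<theta> / (2 * pi) + r * d3 / pi)) (at 0)"
proof -
  note b = sin_bounds[OF th]
  have S: "((\<lambda>t. sin (arcsin ((pi * sin \<theta> + t * d3) / pi))) has_field_derivative cos (arcsin (sin \<theta>)) * (inverse (sqrt (1 - (sin \<theta>)\<^sup>2)) * (d3 / pi))) (at 0)"
    using DERIV_chain2[OF DERIV_sin arcsin_path[OF b(1,2)]] by simp
  have e: "d1 * rmax / (2 * pi) * sin (arcsin ((pi * sin \<theta> + 0 * d3) / pi)) +
     cos (arcsin (sin \<theta>)) * (inverse (sqrt (1 - (sin \<theta>)\<^sup>2)) * (d3 / pi)) * ((2 * pi * r / rmax + 0 * d1) * rmax / (2 * pi))
     = d1 * rmax * sin \<theta> / (2 * pi) + r * d3 / pi"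
    using b rm th by (simp add: arcsin_sin less_imp_le field_simps)
  show ?thesis using DERIV_mult[OF R_path[OF rm, where r=r and dd=d1] S] by (simp only: e)
qed

lemma jac2:
  assumes th: "- (pi / 2) < \<theta>" "\<theta> < pi / 2" and rm: "rmax > 0"
  shows "((\<lambda>t. (2 * pi * r / rmax + t * d1) * rmax / (2 * pi) * cos (arcsin ((pi * sin \<theta> + t * d3) / pi)))
     has_field_derivative (d1 * rmax * cos \<theta> / (2 * pi) - r * tan \<theta> * d3 / pi)) (at 0)"
proof -
  note b = sin_bounds[OF th]
  have S: "((\<lambda>t. cos (arcsin ((pi * sin \<theta> + t * d3) / pi))) has_field_derivative - sin (arcsin (sin \<theta>)) * (inverse (sqrt (1 - (sin \<theta>)\<^sup>2)) * (d3 / pi))) (at 0)"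
    using DERIV_chain2[OF DERIV_cos arcsin_path[OF b(1,2)]] by simp
  have e: "d1 * rmax / (2 * pi) * cos (arcsin ((pi * sin \<theta> + 0 * d3) / pi)) +
     - sin (arcsin (sin \<theta>)) * (inverse (sqrt (1 - (sin \<theta>)\<^sup>2)) * (d3 / pi)) * ((2 * pi * r / rmax + 0 * d1) * rmax / (2 * pi))
     = d1 * rmax * cos \<theta> / (2 * pi) - r * tan \<theta> * d3 / pi"
    using b rm th by (simp add: arcsin_sin less_imp_le field_simps tan_def)
  show ?thesis using DERIV_mult[OF R_path[OF rm, where r=r and dd=d1] S] by (simp only: e)
qed

lemma pos_jac:
  assumes th: "- (pi / 2) < \<theta>" "\<theta> < pi / 2" and rm: "rmax > 0"
  shows "pos_jacobian rmax (vector [2 * pi * r / rmax, a2, pi * sin \<theta>, a4, a5, a6] :: real^6)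
    = vector [vector [rmax * sin \<theta> / (2 * pi), 0, r / pi, 0, 0, 0],
              vector [rmax * cos \<theta> / (2 * pi), 0, - (r * tan \<theta>) / pi, 0, 0, 0]]"
proof -
  define \<xi> where "\<xi> = (vector [2 * pi * r / rmax, a2, pi * sin \<theta>, a4, a5, a6] :: real^6)"
  have f1: "(\<lambda>t. pos_map rmax (\<xi> + t *\<^sub>R axis k 1) $ 1) = (\<lambda>t. (2 * pi * r / rmax + t * (axis k 1 :: real^6) $ 1) * rmax / (2 * pi)
      * sin (arcsin ((pi * sin \<theta> + t * (axis k 1 :: real^6) $ 3) / pi)))" for k
    by (simp add: pos_map_def \<xi>_def Let_def)
  have f2: "(\<lambda>t. pos_map rmax (\<xi> + t *\<^sub>R axis k 1) $ 2) = (\<lambda>t. (2 * pi * r / rmax + t * (axis k 1 :: real^6) $ 1) * rmax / (2 * pi)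
      * cos (arcsin ((pi * sin \<theta> + t * (axis k 1 :: real^6) $ 3) / pi)))" for k
    by (simp add: pos_map_def \<xi>_def Let_def)
  have d1: "deriv (\<lambda>t. pos_map rmax (\<xi> + t *\<^sub>R axis k 1) $ 1) 0
     = (axis k 1 :: real^6) $ 1 * rmax * sin \<theta> / (2 * pi) + r * (axis k 1 :: real^6) $ 3 / pi" for k
    unfolding f1 by (rule DERIV_imp_deriv[OF jac1[OF th rm]])
  have d2: "deriv (\<lambda>t. pos_map rmax (\<xi> + t *\<^sub>R axis k 1) $ 2) 0
     = (axis k 1 :: real^6) $ 1 * rmax * cos \<theta> / (2 * pi) - r * tan \<theta> * (axis k 1 :: real^6) $ 3 / pi" for k
    unfolding f2 by (rule DERIV_imp_deriv[OF jac2[OF th rm]])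
  have d1': "deriv (\<lambda>t. pos_map rmax (\<xi> + t *\<^sub>R axis k 1) $ 1) 0
     = (if k = 1 then rmax * sin \<theta> / (2 * pi) else 0) + (if k = 3 then r / pi else 0)" for k
    unfolding d1 by (simp add: axis_def)
  have d2': "deriv (\<lambda>t. pos_map rmax (\<xi> + t *\<^sub>R axis k 1) $ 2) 0
     = (if k = 1 then rmax * cos \<theta> / (2 * pi) else 0) - (if k = 3 then r * tan \<theta> / pi else 0)" for k
    unfolding d2 by (simp add: axis_def)
  show ?thesis
    unfolding \<xi>_def[symmetric] vec_eq_iff pos_jacobian_def
  proof (intro allI)
    fix i :: 2 and k :: 6
    show "(\<chi> i k. deriv (\<lambda>t. pos_map rmax (\<xi> + t *\<^sub>R axis k 1) $ i) 0) $ i $ k =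
       vector [vector [rmax * sin \<theta> / (2 * pi), 0, r / pi, 0, 0, 0],
              vector [rmax * cos \<theta> / (2 * pi), 0, - (r * tan \<theta>) / pi, 0, 0, 0]] $ i $ k"
      using exhaust_2[of i] exhaust_6[of k]
      by (auto simp: d1' d2')
  qed
qed

lemma final_alg:
  fixes A B K g s2 rmax r \<theta> mx my mz vy f5 f6 :: real
  assumes A: "A \<noteq> 0" and B: "B \<noteq> 0" and K: "K > 0" and g: "g > 0" and s2: "s2 > 0" and c: "cos \<theta> > 0"
  shows "((vector [vector [rmax * sin \<theta> / (2 * pi), 0, r / pi, 0, 0, 0],
              vector [rmax * cos \<theta> / (2 * pi), 0, - (r * tan \<theta>) / pi, 0, 0, 0]] :: real^6^2) **
          Gm (2 * g\<^sup>2 * K / s2) mx my mz (A / 12) vy (B / 12) f5 f6 **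
          transpose (vector [vector [rmax * sin \<theta> / (2 * pi), 0, r / pi, 0, 0, 0],
              vector [rmax * cos \<theta> / (2 * pi), 0, - (r * tan \<theta>) / pi, 0, 0, 0]] :: real^6^2))
     = vector [vector [6 * s2 / (pi\<^sup>2 * K * g\<^sup>2) * (rmax\<^sup>2 * (sin \<theta>)\<^sup>2 / (4 * A) + r\<^sup>2 / B),
                        6 * s2 / (pi\<^sup>2 * K * g\<^sup>2) * ((rmax\<^sup>2 / (4 * A) - r\<^sup>2 / (B * (cos \<theta>)\<^sup>2)) * sin \<theta> * cos \<theta>)],
               vector [6 * s2 / (pi\<^sup>2 * K * g\<^sup>2) * ((rmax\<^sup>2 / (4 * A) - r\<^sup>2 / (B * (cos \<theta>)\<^sup>2)) * sin \<theta> * cos \<theta>),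
                        6 * s2 / (pi\<^sup>2 * K * g\<^sup>2) * (rmax\<^sup>2 * (cos \<theta>)\<^sup>2 / (4 * A) + r\<^sup>2 * (tan \<theta>)\<^sup>2 / B)]]"
  unfolding vec_eq_iff
proof (intro allI)
  fix i j :: 2
  have cn: "cos \<theta> \<noteq> 0" using c by simp
  show "((vector [vector [rmax * sin \<theta> / (2 * pi), 0, r / pi, 0, 0, 0],
              vector [rmax * cos \<theta> / (2 * pi), 0, - (r * tan \<theta>) / pi, 0, 0, 0]] :: real^6^2) **
          Gm (2 * g\<^sup>2 * K / s2) mx my mz (A / 12) vy (B / 12) f5 f6 **
          transpose (vector [vector [rmax * sin \<theta> / (2 * pi), 0, r / pi, 0, 0, 0],
              vector [rmax * cos \<theta> / (2 * pi), 0, - (r * tan \<theta>) / pi, 0, 0, 0]] :: real^6^2)) $ i $ j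
     = vector [vector [6 * s2 / (pi\<^sup>2 * K * g\<^sup>2) * (rmax\<^sup>2 * (sin \<theta>)\<^sup>2 / (4 * A) + r\<^sup>2 / B),
                        6 * s2 / (pi\<^sup>2 * K * g\<^sup>2) * ((rmax\<^sup>2 / (4 * A) - r\<^sup>2 / (B * (cos \<theta>)\<^sup>2)) * sin \<theta> * cos \<theta>)],
               vector [6 * s2 / (pi\<^sup>2 * K * g\<^sup>2) * ((rmax\<^sup>2 / (4 * A) - r\<^sup>2 / (B * (cos \<theta>)\<^sup>2)) * sin \<theta> * cos \<theta>),
                        6 * s2 / (pi\<^sup>2 * K * g\<^sup>2) * (rmax\<^sup>2 * (cos \<theta>)\<^sup>2 / (4 * A) + r\<^sup>2 * (tan \<theta>)\<^sup>2 / B)]] $ i $ j"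
    using exhaust_2[of i] exhaust_2[of j] A B K g s2 cn
    apply (auto simp: matrix_matrix_mult_def transpose_def sum_6 Gm_def)
    apply (simp_all add: field_simps power2_eq_square tan_def)
    done
qed

theorem proposition1:
  fixes N M L :: nat and rmax vmax r v \<theta> \<phi> g \<sigma>2 :: real
  assumes "N \<ge> 2" and "M \<ge> 2" and "L \<ge> 2"
    and "rmax > 0" and "vmax > 0"
    and "- (pi / 2) < \<theta>" and "\<theta> < pi / 2"
    and "g > 0" and "\<sigma>2 > 0"
  shows "crb_pos N M L rmax
           (vector [2 * pi * r / rmax, pi * v / vmax, pi * sin \<theta>, \<phi>, g, \<sigma>2] :: real^6)
         = (let c = 6 * \<sigma>2 / (pi\<^sup>2 * real N * real M * real L * g\<^sup>2);
                dN = 4 * ((real N)\<^sup>2 - 1);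
                dL = (real L)\<^sup>2 - 1;
                a = rmax\<^sup>2 * (sin \<theta>)\<^sup>2 / dN + r\<^sup>2 / dL;
                b = (rmax\<^sup>2 / dN - r\<^sup>2 / (dL * (cos \<theta>)\<^sup>2)) * sin \<theta> * cos \<theta>;
                d = rmax\<^sup>2 * (cos \<theta>)\<^sup>2 / dN + r\<^sup>2 * (tan \<theta>)\<^sup>2 / dL
            in vector [vector [c * a, c * b], vector [c * b, c * d]])"
proof -
  define \<xi> where "\<xi> = (vector [2 * pi * r / rmax, pi * v / vmax, pi * sin \<theta>, \<phi>, g, \<sigma>2] :: real^6)"
  have x5: "\<xi>$5 = g" and x6: "\<xi>$6 = \<sigma>2" by (simp_all add: \<xi>_def)
  define x where "x = real N"
  define y where "y = real M"
  define z where "z = real L"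
  have xg: "x \<ge> 2" "y \<ge> 2" "z \<ge> 2" using assms by (simp_all add: x_def y_def z_def)
  have nz: "x\<^sup>2 - 1 \<noteq> 0" "y\<^sup>2 - 1 \<noteq> 0" "z\<^sup>2 - 1 \<noteq> 0"
  proof -
    have "x\<^sup>2 \<ge> 2 * 2" "y\<^sup>2 \<ge> 2 * 2" "z\<^sup>2 \<ge> 2 * 2"
      using mult_mono[OF xg(1) xg(1)] mult_mono[OF xg(2) xg(2)] mult_mono[OF xg(3) xg(3)] xg
      by (simp_all add: power2_eq_square)
    then show "x\<^sup>2 - 1 \<noteq> 0" "y\<^sup>2 - 1 \<noteq> 0" "z\<^sup>2 - 1 \<noteq> 0" by auto
  qed
  have Kpos: "x * y * z > 0" using xg by simp
  let ?c = "2 * g\<^sup>2 * (x * y * z) / \<sigma>2"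
  let ?args = "(?c, (x - 1) / 2, (y - 1) / 2, (z - 1) / 2, (x\<^sup>2 - 1) / 12, (y\<^sup>2 - 1) / 12, (z\<^sup>2 - 1) / 12,
       2 * (x * y * z) / \<sigma>2, (x * y * z) / \<sigma>2\<^sup>2)"
  have F: "fisher_info N M L \<xi> = Fm ?c ((x - 1) / 2) ((y - 1) / 2) ((z - 1) / 2)
      ((x\<^sup>2 - 1) / 12) ((y\<^sup>2 - 1) / 12) ((z\<^sup>2 - 1) / 12) (2 * (x * y * z) / \<sigma>2) ((x * y * z) / \<sigma>2\<^sup>2)"
    using fisher_concrete[of \<xi> N M L] x5 x6 assms by (simp add: x_def y_def z_def)
  have Ginv: "matrix_inv (fisher_info N M L \<xi>) = Gm ?c ((x - 1) / 2) ((y - 1) / 2) ((z - 1) / 2)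
      ((x\<^sup>2 - 1) / 12) ((y\<^sup>2 - 1) / 12) ((z\<^sup>2 - 1) / 12) (2 * (x * y * z) / \<sigma>2) ((x * y * z) / \<sigma>2\<^sup>2)"
    unfolding F
    apply (rule matrix_inv_eq)
    apply (rule FG_inv)
    using nz Kpos assms by auto
  have J: "pos_jacobian rmax \<xi> = vector [vector [rmax * sin \<theta> / (2 * pi), 0, r / pi, 0, 0, 0],
              vector [rmax * cos \<theta> / (2 * pi), 0, - (r * tan \<theta>) / pi, 0, 0, 0]]"
    unfolding \<xi>_def using assms by (intro pos_jac) auto
  have cpos: "cos \<theta> > 0" using cos_gt_zero_pi assms by blast
  have T: "(let c = 6 * \<sigma>2 / (pi\<^sup>2 * real N * real M * real L * g\<^sup>2);
                dN = 4 * ((real N)\<^sup>2 - 1);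
                dL = (real L)\<^sup>2 - 1;
                a = rmax\<^sup>2 * (sin \<theta>)\<^sup>2 / dN + r\<^sup>2 / dL;
                b = (rmax\<^sup>2 / dN - r\<^sup>2 / (dL * (cos \<theta>)\<^sup>2)) * sin \<theta> * cos \<theta>;
                d = rmax\<^sup>2 * (cos \<theta>)\<^sup>2 / dN + r\<^sup>2 * (tan \<theta>)\<^sup>2 / dL
            in vector [vector [c * a, c * b], vector [c * b, c * d]] :: real^2^2)
     = vector [vector [6 * \<sigma>2 / (pi\<^sup>2 * (x * y * z) * g\<^sup>2) * (rmax\<^sup>2 * (sin \<theta>)\<^sup>2 / (4 * (x\<^sup>2 - 1)) + r\<^sup>2 / (z\<^sup>2 - 1)),
                        6 * \<sigma>2 / (pi\<^sup>2 * (x * y * z) * g\<^sup>2) * ((rmax\<^sup>2 / (4 * (x\<^sup>2 - 1)) - r\<^sup>2 / ((z\<^sup>2 - 1) * (cos \<theta>)\<^sup>2)) * sin \<theta> * cos \<theta>)],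
               vector [6 * \<sigma>2 / (pi\<^sup>2 * (x * y * z) * g\<^sup>2) * ((rmax\<^sup>2 / (4 * (x\<^sup>2 - 1)) - r\<^sup>2 / ((z\<^sup>2 - 1) * (cos \<theta>)\<^sup>2)) * sin \<theta> * cos \<theta>),
                        6 * \<sigma>2 / (pi\<^sup>2 * (x * y * z) * g\<^sup>2) * (rmax\<^sup>2 * (cos \<theta>)\<^sup>2 / (4 * (x\<^sup>2 - 1)) + r\<^sup>2 * (tan \<theta>)\<^sup>2 / (z\<^sup>2 - 1))]]"
    unfolding Let_def x_def y_def z_def by (simp add: mult.assoc)
  show ?thesis
    unfolding \<xi>_def[symmetric] crb_pos_def Ginv J T
    by (rule final_alg[OF nz(1) nz(3) Kpos assms(8) assms(9) cpos])
qed

end
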